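(* $\mathcal{SED} \cap \mathcal{USAT} \subsetneq \mathcal{VMU}$; moreover every unsatisfiable multi-clause-set $F$ with $\sigma(F) = \delta(F)$ has its underlying clause-set in $\mathcal{VMU}$.
   Context: Literals come with a fixed-point-free involution $x \mapsto \overline{x}$; variables are positive literals. A clause is a finite set $C$ of literals with $C \cap \overline{C} = \emptyset$; a clause-set is a finite set of clauses; a multi-clause-set assigns finitely many clauses a positive multiplicity, and its underlying clause-set is the set of those clauses. $\mathrm{var}(F)$, $n(F) = |\mathrm{var}(F)|$, $c(F)$ the number of clauses counted with multiplicity, $\delta(F) = c(F) - n(F)$. Surplus: $\sigma(F) = \min_{\emptyset \ne V \subseteq \mathrm{var}(F)} (\#\{\text{clauses (with multiplicity) containing a variable of } V\} - |V|)$ for $n(F)>0$, $\sigma(F) = 0$ otherwise. $F$ is satisfiable iff some assignment of truth values makes a literal of every clause true; a multi-clause-set is (un)satisfiable iff its underlying clause-set is. $\mathcal{USAT}$ is the class of unsatisfiable clause-sets; $\mathcal{SED}$ is the class of clause-sets $F$ with $\sigma(F) = \delta(F)$. $\mathcal{VMU}$ is the class of unsatisfiable clause-sets $F$ such that every unsatisfiable $F' \subseteq F$ has $\mathrm{var}(F') = \mathrm{var}(F)$. *)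

theory Defs
  imports Main "HOL-Library.Multiset"
begin

datatype 'a lit = Pos 'a | Neg 'a

fun comp :: "'a lit \<Rightarrow> 'a lit" where
  "comp (Pos v) = Neg v"
| "comp (Neg v) = Pos v"

fun lvar :: "'a lit \<Rightarrow> 'a" where
  "lvar (Pos v) = v"
| "lvar (Neg v) = v"

type_synonym 'a clause = "'a lit set"

definition is_clause :: "'a clause \<Rightarrow> bool" where
  "is_clause C \<longleftrightarrow> finite C \<and> C \<inter> comp ` C = {}"

definition is_clause_set :: "'a clause set \<Rightarrow> bool" where
  "is_clause_set F \<longleftrightarrow> finite F \<and> (\<forall>C\<in>F. is_clause C)"

definition is_mclause_set :: "'a clause multiset \<Rightarrow> bool" where
  "is_mclause_set F \<longleftrightarrow> (\<forall>C\<in>#F. is_clause C)"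

definition cvar :: "'a clause \<Rightarrow> 'a set" where
  "cvar C = lvar ` C"

definition mvar :: "'a clause multiset \<Rightarrow> 'a set" where
  "mvar F = (\<Union>C\<in>set_mset F. cvar C)"

definition mn :: "'a clause multiset \<Rightarrow> nat" where
  "mn F = card (mvar F)"

definition mc :: "'a clause multiset \<Rightarrow> nat" where
  "mc F = size F"

definition mdelta :: "'a clause multiset \<Rightarrow> int" where
  "mdelta F = int (mc F) - int (mn F)"

definition msigma :: "'a clause multiset \<Rightarrow> int" where
  "msigma F = (if mn F = 0 then 0 else
     Min {int (size (filter_mset (\<lambda>C. cvar C \<inter> V \<noteq> {}) F)) - int (card V)
          | V. V \<noteq> {} \<and> V \<subseteq> mvar F})"

definition lit_true :: "('a \<Rightarrow> bool) \<Rightarrow> 'a lit \<Rightarrow> bool" where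
  "lit_true \<phi> x = (case x of Pos v \<Rightarrow> \<phi> v | Neg v \<Rightarrow> \<not> \<phi> v)"

definition sat :: "'a clause set \<Rightarrow> bool" where
  "sat F \<longleftrightarrow> (\<exists>\<phi>. \<forall>C\<in>F. \<exists>x\<in>C. lit_true \<phi> x)"

text \<open>Clause-set notions: a clause-set is the multi-clause-set with all multiplicities 1.\<close>
definition var :: "'a clause set \<Rightarrow> 'a set" where
  "var F = mvar (mset_set F)"

definition delta :: "'a clause set \<Rightarrow> int" where
  "delta F = mdelta (mset_set F)"

definition sigma :: "'a clause set \<Rightarrow> int" where
  "sigma F = msigma (mset_set F)"

definition USAT :: "'a clause set set" where
  "USAT = {F. is_clause_set F \<and> \<not> sat F}"

definition SED :: "'a clause set set" where
  "SED = {F. is_clause_set F \<and> sigma F = delta F}"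

definition VMU :: "'a clause set set" where
  "VMU = {F. F \<in> USAT \<and> (\<forall>F'. F' \<subseteq> F \<and> F' \<in> USAT \<longrightarrow> var F' = var F)}"

end

theory Submission
  imports Defs
begin


definition vs :: "'a clause set \<Rightarrow> 'a set" where
  "vs R = (\<Union>C\<in>R. cvar C)"

lemma vs_union: "vs (A \<union> B) = vs A \<union> vs B" by (auto simp: vs_def)
lemma vs_mono: "A \<subseteq> B \<Longrightarrow> vs A \<subseteq> vs B" by (auto simp: vs_def)
lemma finite_vs: "finite R \<Longrightarrow> \<forall>C\<in>R. finite C \<Longrightarrow> finite (vs R)"
  by (auto simp: vs_def cvar_def)

lemma sat_mono: "sat F \<Longrightarrow> G \<subseteq> F \<Longrightarrow> sat G"
  unfolding sat_def by blast

lemma hall: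
  "finite G \<Longrightarrow> \<forall>C\<in>G. finite C \<Longrightarrow> \<forall>R\<subseteq>G. card R \<le> card (vs R - X)
   \<Longrightarrow> \<exists>\<phi>. \<forall>C\<in>G. \<exists>x\<in>C. lvar x \<notin> X \<and> lit_true \<phi> x"
proof (induction "card G" arbitrary: G X rule: less_induct)
  case less
  show ?case
  proof (cases "G = {}")
    case True then show ?thesis by simp
  next
    case Gne: False
    show ?thesis
    proof (cases "\<exists>R. R \<subset> G \<and> R \<noteq> {} \<and> card R = card (vs R - X)")
      case True
      then obtain R where R: "R \<subset> G" "R \<noteq> {}" "card R = card (vs R - X)" by blast
      have fR: "finite R" using R less.prems(1) finite_subset by blast
      have "card R < card G" using R less.prems(1) psubset_card_mono by blast
      then obtain \<phi>1 where p1: "\<forall>C\<in>R. \<exists>x\<in>C. lvar x \<notin> X \<and> lit_true \<phi>1 x"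
      proof -
        have "\<forall>Ra\<subseteq>R. card Ra \<le> card (vs Ra - X)" using less.prems(3) R(1) by blast
        moreover have "Ball R finite" using less.prems(2) R(1) by blast
        ultimately show ?thesis using less.hyps[of R X] \<open>card R < card G\<close> fR that by blast
      qed
      have "card R > 0" using R(2) fR by auto
      have "card (G - R) < card G"
      proof -
        have "card (G - R) = card G - card R" using R(1) fR by (simp add: card_Diff_subset psubset_imp_subset)
        then show ?thesis using \<open>card R > 0\<close> \<open>card R < card G\<close> by linarith
      qed
      moreover have "\<forall>T\<subseteq>G - R. card T \<le> card (vs T - (X \<union> vs R))"
      proof (intro allI impI)
        fix T assume T: "T \<subseteq> G - R"
        have fT: "finite T" using T less.prems(1) finite_subset by blast
        have fv: "finite (vs (R \<union> T))" using finite_vs[of "R \<union> T"] fT fR R(1) T less.prems(2) by blast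
        have "card (R \<union> T) \<le> card (vs (R \<union> T) - X)" using less.prems(3) R(1) T by blast
        moreover have "card (R \<union> T) = card R + card T" using T fR fT by (subst card_Un_disjoint) auto
        moreover have "vs (R \<union> T) - X = (vs R - X) \<union> (vs T - (X \<union> vs R))" by (auto simp: vs_union)
        moreover have "card ((vs R - X) \<union> (vs T - (X \<union> vs R))) = card (vs R - X) + card (vs T - (X \<union> vs R))"
          using fv by (subst card_Un_disjoint) (auto simp: vs_union)
        ultimately have "card R + card T \<le> card (vs R - X) + card (vs T - (X \<union> vs R))" by metis
        then show "card T \<le> card (vs T - (X \<union> vs R))" using R(3) by linarith
      qed
      ultimately obtain \<phi>2 where p2: "\<forall>C\<in>G - R. \<exists>x\<in>C. lvar x \<notin> X \<union> vs R \<and> lit_true \<phi>2 x"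
        using less.hyps[of "G - R" "X \<union> vs R"] less.prems by blast
      define \<phi> where "\<phi> = (\<lambda>v. if v \<in> vs R then \<phi>1 v else \<phi>2 v)"
      have "\<forall>C\<in>G. \<exists>x\<in>C. lvar x \<notin> X \<and> lit_true \<phi> x"
      proof
        fix C assume C: "C \<in> G"
        show "\<exists>x\<in>C. lvar x \<notin> X \<and> lit_true \<phi> x"
        proof (cases "C \<in> R")
          case True
          then obtain x where x: "x \<in> C" "lvar x \<notin> X" "lit_true \<phi>1 x" using p1 by blast
          have "lvar x \<in> vs R" using x True by (auto simp: vs_def cvar_def)
          then have "lit_true \<phi> x = lit_true \<phi>1 x" by (cases x) (auto simp: lit_true_def \<phi>_def)
          then show ?thesis using x by blast
        next
          case False
          then obtain x where x: "x \<in> C" "lvar x \<notin> X \<union> vs R" "lit_true \<phi>2 x" using p2 C by blast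
          then have "lit_true \<phi> x = lit_true \<phi>2 x" by (cases x) (auto simp: lit_true_def \<phi>_def)
          then show ?thesis using x by blast
        qed
      qed
      then show ?thesis by blast
    next
      case False
      then have strict: "\<forall>R. R \<subset> G \<and> R \<noteq> {} \<longrightarrow> card R < card (vs R - X)"
        using less.prems(3) le_neq_implies_less by blast
      obtain C where C: "C \<in> G" using Gne by blast
      have "card {C} \<le> card (vs {C} - X)" using less.prems(3) C by blast
      then have "vs {C} - X \<noteq> {}"
      proof (intro notI)
        assume "card {C} \<le> card (vs {C} - X)" "vs {C} - X = {}"
        then show False by simp
      qed
      then obtain x where x: "x \<in> C" "lvar x \<notin> X" by (auto simp: vs_def cvar_def)
      let ?X = "insert (lvar x) X"
      have "card (G - {C}) < card G" using C less.prems(1) by (intro card_Diff1_less)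
      moreover have "\<forall>R\<subseteq>G - {C}. card R \<le> card (vs R - ?X)"
      proof (intro allI impI)
        fix R assume R: "R \<subseteq> G - {C}"
        show "card R \<le> card (vs R - ?X)"
        proof (cases "R = {}")
          case True then show ?thesis by simp
        next
          case False
          have fR: "finite R" using R less.prems(1) finite_subset by blast
          have fv: "finite (vs R)" using finite_vs[of R] fR R less.prems(2) by blast
          have "R \<subset> G" using R C by blast
          then have "card R < card (vs R - X)" using strict False by blast
          moreover have "card (vs R - X) \<le> card (vs R - ?X) + 1"
          proof -
            have "vs R - X \<subseteq> insert (lvar x) (vs R - ?X)" by blast
            then have "card (vs R - X) \<le> card (insert (lvar x) (vs R - ?X))"
              using fv by (intro card_mono) auto
            also have "\<dots> \<le> card (vs R - ?X) + 1" using fv by (simp add: card_insert_if)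
            finally show ?thesis .
          qed
          ultimately show ?thesis by linarith
        qed
      qed
      ultimately obtain \<phi>' where p: "\<forall>D\<in>G - {C}. \<exists>y\<in>D. lvar y \<notin> ?X \<and> lit_true \<phi>' y"
        using less.hyps[of "G - {C}" ?X] less.prems by blast
      define \<phi> where "\<phi> = \<phi>'(lvar x := (case x of Pos v \<Rightarrow> True | Neg v \<Rightarrow> False))"
      have "\<forall>D\<in>G. \<exists>y\<in>D. lvar y \<notin> X \<and> lit_true \<phi> y"
      proof
        fix D assume D: "D \<in> G"
        show "\<exists>y\<in>D. lvar y \<notin> X \<and> lit_true \<phi> y"
        proof (cases "D = C")
          case True
          have "lit_true \<phi> x" by (cases x) (auto simp: lit_true_def \<phi>_def)
          then show ?thesis using x True by blast
        next
          case False
          then obtain y where y: "y \<in> D" "lvar y \<notin> ?X" "lit_true \<phi>' y" using p D by blast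
          then have "lit_true \<phi> y = lit_true \<phi>' y" by (cases y) (auto simp: lit_true_def \<phi>_def)
          then show ?thesis using y by blast
        qed
      qed
      then show ?thesis by blast
    qed
  qed
qed



lemma tarsi:
  assumes fF: "finite F" and fC: "\<forall>C\<in>F. finite C" and unsat: "\<not> sat F"
    and mu: "\<forall>F'. F' \<subset> F \<longrightarrow> sat F'"
  shows "card (vs F) < card F"
proof (rule ccontr)
  assume le: "\<not> card (vs F) < card F"
  define d where "d S = int (card S) - int (card (vs S))" for S :: "'a clause set"
  have "finite (d ` Pow F)" using fF by simp
  moreover have "d ` Pow F \<noteq> {}" by blast
  ultimately have "Max (d ` Pow F) \<in> d ` Pow F" by (rule Max_in)
  then obtain S0 where S0: "S0 \<subseteq> F" "d S0 = Max (d ` Pow F)" by auto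
  have dmax: "d S \<le> d S0" if "S \<subseteq> F" for S
  proof -
    have "d S \<le> Max (d ` Pow F)" using that \<open>finite (d ` Pow F)\<close> by (intro Max_ge) auto
    then show ?thesis using S0 by simp
  qed
  obtain S where S: "S \<subseteq> F" "S \<noteq> F" "\<And>T. T \<subseteq> F \<Longrightarrow> d T \<le> d S"
  proof (cases "S0 = F")
    case True
    have "d F \<le> 0" using le by (simp add: d_def)
    moreover have "d {} = 0" by (simp add: d_def vs_def)
    moreover have "F \<noteq> {}" using unsat by (auto simp: sat_def)
    ultimately show ?thesis using that[of "{}"] dmax True by force
  next
    case False then show ?thesis using that S0 dmax by blast
  qed
  have fS: "finite S" using S fF finite_subset by blast
  have "sat S" using mu S by blast
  then obtain \<phi>1 where p1: "\<forall>C\<in>S. \<exists>x\<in>C. lit_true \<phi>1 x" by (auto simp: sat_def)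
  have "\<forall>R\<subseteq>F - S. card R \<le> card (vs R - vs S)"
  proof (intro allI impI)
    fix R assume R: "R \<subseteq> F - S"
    have fR: "finite R" using R fF finite_subset by blast
    have fv: "finite (vs S)" "finite (vs R)" using finite_vs fS fR fC S R by blast+
    have "d (S \<union> R) \<le> d S" using S R by blast
    moreover have "card (S \<union> R) = card S + card R" using R fS fR by (subst card_Un_disjoint) auto
    moreover have "card (vs (S \<union> R)) = card (vs S) + card (vs R - vs S)"
    proof -
      have "vs (S \<union> R) = vs S \<union> (vs R - vs S)" by (auto simp: vs_union)
      then have "card (vs (S \<union> R)) = card (vs S \<union> (vs R - vs S))" by (simp only:)
      also have "\<dots> = card (vs S) + card (vs R - vs S)" using fv by (intro card_Un_disjoint) auto
      finally show ?thesis .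
    qed
    ultimately show "card R \<le> card (vs R - vs S)" by (simp add: d_def)
  qed
  then obtain \<phi>2 where p2: "\<forall>C\<in>F - S. \<exists>x\<in>C. lvar x \<notin> vs S \<and> lit_true \<phi>2 x"
    using hall[of "F - S" "vs S"] fF fC by blast
  define \<phi> where "\<phi> = (\<lambda>v. if v \<in> vs S then \<phi>1 v else \<phi>2 v)"
  have "\<forall>C\<in>F. \<exists>x\<in>C. lit_true \<phi> x"
  proof
    fix C assume C: "C \<in> F"
    show "\<exists>x\<in>C. lit_true \<phi> x"
    proof (cases "C \<in> S")
      case True
      then obtain x where x: "x \<in> C" "lit_true \<phi>1 x" using p1 by blast
      have "lvar x \<in> vs S" using x True by (auto simp: vs_def cvar_def)
      then have "lit_true \<phi> x = lit_true \<phi>1 x" by (cases x) (auto simp: lit_true_def \<phi>_def)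
      then show ?thesis using x by blast
    next
      case False
      then obtain x where x: "x \<in> C" "lvar x \<notin> vs S" "lit_true \<phi>2 x" using p2 C by blast
      then have "lit_true \<phi> x = lit_true \<phi>2 x" by (cases x) (auto simp: lit_true_def \<phi>_def)
      then show ?thesis using x by blast
    qed
  qed
  then show False using unsat unfolding sat_def by blast
qed



lemma mu_exists:
  assumes "finite F" "\<not> sat F"
  shows "\<exists>M\<subseteq>F. \<not> sat M \<and> (\<forall>M'. M' \<subset> M \<longrightarrow> sat M')"
proof -
  define P where "P n = (\<exists>M\<subseteq>F. \<not> sat M \<and> card M = n)" for n
  have ex: "\<exists>n. P n" unfolding P_def using assms(2) by blast
  define n where "n = (LEAST n. P n)"
  have Pn: "P n" unfolding n_def by (rule LeastI_ex[OF ex])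
  have least: "\<not> P m" if "m < n" for m using not_less_Least[of m P] that unfolding n_def .
  obtain M where M: "M \<subseteq> F" "\<not> sat M" "card M = n" using Pn unfolding P_def by blast
  have fM: "finite M" using M(1) assms(1) finite_subset by blast
  have "sat M'" if "M' \<subset> M" for M'
  proof (rule ccontr)
    assume "\<not> sat M'"
    moreover have "card M' < n" using psubset_card_mono[OF fM that] M(3) by simp
    moreover have "M' \<subseteq> F" using that M(1) by blast
    ultimately show False using least unfolding P_def by blast
  qed
  then show ?thesis using M(1,2) by blast
qed

lemma vs_var: "finite F \<Longrightarrow> var F = vs F"
  by (simp add: var_def mvar_def vs_def)

lemma mvar_vs: "mvar F = vs (set_mset F)"
  by (simp add: mvar_def vs_def)



lemma part2:
  assumes cl: "is_mclause_set F" and unsat: "\<not> sat (set_mset F)" and eq: "msigma F = mdelta F"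
  shows "set_mset F \<in> VMU"
proof -
  have fC: "\<forall>C\<in>set_mset F. finite C" using cl by (auto simp: is_mclause_set_def is_clause_def)
  have csF: "is_clause_set (set_mset F)" using cl by (auto simp: is_mclause_set_def is_clause_set_def)
  have fvF: "finite (mvar F)" using finite_vs[of "set_mset F"] fC by (simp add: mvar_vs)
  have "var F' = var (set_mset F)" if F': "F' \<subseteq> set_mset F" "F' \<in> USAT" for F'
  proof (rule ccontr)
    assume ne: "var F' \<noteq> var (set_mset F)"
    have fF': "finite F'" using F'(1) finite_subset by blast
    have "\<not> sat F'" using F'(2) by (simp add: USAT_def)
    then obtain M where M: "M \<subseteq> F'" "\<not> sat M" "\<forall>M'. M' \<subset> M \<longrightarrow> sat M'"
      using mu_exists fF' by blast
    have fM: "finite M" using M(1) fF' finite_subset by blast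
    have fCM: "\<forall>C\<in>M. finite C" using M(1) F'(1) fC by blast
    have tar: "card (vs M) < card M" using tarsi[OF fM fCM M(2) M(3)] .
    have vF: "var (set_mset F) = mvar F" by (simp add: vs_var mvar_vs)
    have "var F' = vs F'" using fF' vs_var by blast
    then have "vs F' \<noteq> mvar F" using ne vF by simp
    moreover have "vs F' \<subseteq> mvar F" using vs_mono[OF F'(1)] unfolding mvar_vs .
    ultimately have "vs F' \<subset> mvar F" by blast
    moreover have "vs M \<subseteq> vs F'" using vs_mono[OF M(1)] .
    ultimately have sub: "vs M \<subset> mvar F" by blast
    define V where "V = mvar F - vs M"
    have Vne: "V \<noteq> {}" "V \<subseteq> mvar F" using sub V_def by auto
    have "mn F \<noteq> 0" using Vne fvF by (auto simp: mn_def card_eq_0_iff)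
    define P where "P C = (cvar C \<inter> V \<noteq> {})" for C
    have "msigma F \<le> int (size (filter_mset P F)) - int (card V)"
    proof -
      have fin: "finite {int (size (filter_mset (\<lambda>C. cvar C \<inter> V \<noteq> {}) F)) - int (card V)
          | V. V \<noteq> {} \<and> V \<subseteq> mvar F}"
      proof -
        have "{int (size (filter_mset (\<lambda>C. cvar C \<inter> V \<noteq> {}) F)) - int (card V)
          | V. V \<noteq> {} \<and> V \<subseteq> mvar F} \<subseteq> (\<lambda>V. int (size (filter_mset (\<lambda>C. cvar C \<inter> V \<noteq> {}) F)) - int (card V)) ` Pow (mvar F)"
          by blast
        then show ?thesis using fvF finite_subset by blast
      qed
      have mem: "int (size (filter_mset P F)) - int (card V) \<in> {int (size (filter_mset (\<lambda>C. cvar C \<inter> V \<noteq> {}) F)) - int (card V)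
          | V. V \<noteq> {} \<and> V \<subseteq> mvar F}" unfolding P_def
        by (rule CollectI, rule exI[where x=V]) (simp add: Vne)
      have eqm: "msigma F = Min {int (size (filter_mset (\<lambda>C. cvar C \<inter> V \<noteq> {}) F)) - int (card V)
          | V. V \<noteq> {} \<and> V \<subseteq> mvar F}" unfolding msigma_def using \<open>mn F \<noteq> 0\<close> by (rule if_not_P)
      show ?thesis using Min_le[OF fin mem] unfolding eqm .
    qed
    moreover have "size F = size (filter_mset P F) + size (filter_mset (\<lambda>C. \<not> P C) F)"
      by (metis size_union multiset_partition)
    moreover have "M \<subseteq> set_mset (filter_mset (\<lambda>C. \<not> P C) F)"
    proof
      fix C assume C: "C \<in> M"
      have "cvar C \<subseteq> vs M" using C by (auto simp: vs_def)
      then have "\<not> P C" unfolding P_def V_def by blast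
      then show "C \<in> set_mset (filter_mset (\<lambda>C. \<not> P C) F)" using C M(1) F'(1) by auto
    qed
    then have "card M \<le> size (filter_mset (\<lambda>C. \<not> P C) F)"
    proof -
      assume sub: "M \<subseteq> set_mset (filter_mset (\<lambda>C. \<not> P C) F)"
      have "card M \<le> card (set_mset (filter_mset (\<lambda>C. \<not> P C) F))"
        using sub by (intro card_mono) auto
      also have "\<dots> \<le> size (filter_mset (\<lambda>C. \<not> P C) F)"
        using size_mset_mono[OF mset_set_set_mset_msubset[of "filter_mset (\<lambda>C. \<not> P C) F"]] by simp
      finally show ?thesis .
    qed
    moreover have "card (mvar F) = card V + card (vs M)"
    proof -
      have e: "mvar F = V \<union> vs M" using sub V_def by auto
      have "finite (vs M)" using finite_vs fM fCM by blast
      moreover have "finite V" using Vne(2) fvF finite_subset by blast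
      moreover have "V \<inter> vs M = {}" by (auto simp: V_def)
      ultimately have "card (V \<union> vs M) = card V + card (vs M)" by (intro card_Un_disjoint)
      then show ?thesis unfolding e .
    qed
    moreover have "mdelta F = int (size F) - int (card (mvar F))" by (simp add: mdelta_def mc_def mn_def)
    ultimately have "msigma F < mdelta F" using tar by linarith
    then show False using eq by simp
  qed
  moreover have "set_mset F \<in> USAT" using csF unsat by (simp add: USAT_def)
  ultimately show ?thesis unfolding VMU_def by blast
qed



theorem corollary9p6:
  shows "(SED \<inter> USAT :: 'a clause set set) \<subset> VMU \<and>
    (\<forall>F :: 'a clause multiset. is_mclause_set F \<and> \<not> sat (set_mset F) \<and> msigma F = mdelta F
        \<longrightarrow> set_mset F \<in> VMU)"
proof -
  have sub: "(SED \<inter> USAT :: 'a clause set set) \<subseteq> VMU"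
  proof
    fix F :: "'a clause set" assume F: "F \<in> SED \<inter> USAT"
    then have cs: "is_clause_set F" by (simp add: SED_def)
    then have fin: "finite F" by (simp add: is_clause_set_def)
    have "is_mclause_set (mset_set F)" using cs fin by (simp add: is_mclause_set_def is_clause_set_def)
    moreover have "\<not> sat (set_mset (mset_set F))" using F fin by (simp add: USAT_def)
    moreover have "msigma (mset_set F) = mdelta (mset_set F)" using F by (simp add: SED_def sigma_def delta_def)
    ultimately have "set_mset (mset_set F) \<in> VMU" by (rule part2)
    then show "F \<in> VMU" using fin by simp
  qed
  let ?E = "{{}} :: 'a clause set"
  have csE: "is_clause_set ?E" by (simp add: is_clause_set_def is_clause_def)
  have uE: "\<not> sat ?E" by (simp add: sat_def)
  have "?E \<in> VMU"
  proof -
    have "var F' = var ?E" if "F' \<subseteq> ?E" "F' \<in> USAT" for F'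
    proof -
      have "F' \<noteq> {}"
      proof
        assume "F' = {}"
        then have "sat F'" by (simp add: sat_def)
        then show False using that(2) by (simp add: USAT_def)
      qed
      then have "F' = ?E" using that by blast
      then show ?thesis by simp
    qed
    moreover have "?E \<in> USAT" using csE uE by (simp add: USAT_def)
    ultimately show ?thesis unfolding VMU_def by blast
  qed
  moreover have "?E \<notin> SED"
  proof -
    have "var ?E = {}" by (simp add: var_def mvar_def cvar_def)
    then have "mn (mset_set ?E) = 0" by (simp add: mn_def var_def)
    then have "sigma ?E = 0" by (simp add: sigma_def msigma_def)
    moreover have "delta ?E = 1" using \<open>mn (mset_set ?E) = 0\<close> by (simp add: delta_def mdelta_def mc_def)
    ultimately show ?thesis by (simp add: SED_def)
  qed
  ultimately have "(SED \<inter> USAT :: 'a clause set set) \<noteq> VMU" by blast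
  with sub have "(SED \<inter> USAT :: 'a clause set set) \<subset> VMU" by (rule psubsetI)
  moreover have "\<forall>F :: 'a clause multiset. is_mclause_set F \<and> \<not> sat (set_mset F) \<and> msigma F = mdelta F
        \<longrightarrow> set_mset F \<in> VMU"
  proof (intro allI impI)
    fix F :: "'a clause multiset"
    assume "is_mclause_set F \<and> \<not> sat (set_mset F) \<and> msigma F = mdelta F"
    then show "set_mset F \<in> VMU" using part2 by blast
  qed
  ultimately show ?thesis by (rule conjI)
qed


end
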